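(* Let $\mathcal C,\mathcal D$ be parsummable categories and $F\colon\mathcal C\to\mathcal D$ a functor of underlying categories that preserves sums. Then: (1) $I\colon\mathcal C\to F_*\mathcal C$ is a morphism of parsummable categories; (2) if $F$ is essentially surjective, then $\hat F\colon F_*\mathcal C\to\mathcal D$ is an equivalence of categories; (3) as ordinary functors, $F=\hat F\circ I$.
   Context: Let $\omega=\{1,2,\dots\}$, $\mathcal M$ the monoid of injections $\omega\to\omega$, $E\mathcal M$ the category with objects $\mathcal M$ and unique morphisms between any two objects. An $E\mathcal M$-category is a small category with a strict $E\mathcal M$-action ($u_*$ the action of $u$, $u^X_\circ\colon X\to u_*X$ the isomorphism from $1\to u$); $\mathrm{supp}(X)$ is the intersection of finite $A\subset\omega$ with $u_*X=X$ for all $u$ fixing $A$ pointwise; tame means all supports finite. A parsummable category is a tame $E\mathcal M$-category with an object $0$ of empty support and a functor $+$ on the full subcategory $\mathcal C\boxtimes\mathcal C$ of disjointly supported pairs, strictly unital, associative, commutative and $E\mathcal M$-equivariant. A morphism of parsummable categories is a strictly $E\mathcal M$-equivariant functor preserving $0$ and $+$ strictly. A functor $F\colon\mathcal C\to\mathcal D$ of underlying categories preserves sums if $F(0)=0$, $F\times F$ maps $\mathcal C\boxtimes\mathcal C$ into $\mathcal D\boxtimes\mathcal D$, and $F$ commutes with $+$ on objects and morphisms. $F_*\mathcal C$ is the parsummable category whose objects are those of $\mathcal C$, with $\mathrm{Hom}_{F_*\mathcal C}(X,Y)=\mathrm{Hom}_{\mathcal D}(FX,FY)$, $\mathcal M$-action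 on objects as in $\mathcal C$, structure isomorphisms $u^X_\circ$ given by $F(u^X_\circ)$, sum of objects as in $\mathcal C$ and sum of morphisms as in $\mathcal D$. $I\colon\mathcal C\to F_*\mathcal C$ is the identity on objects and sends $f\colon X\to Y$ to $F(f)$. $\hat F\colon F_*\mathcal C\to\mathcal D$ is $F$ on objects and the identity on hom-sets. *)

theory Defs
  imports Main
begin

record ('o,'m) cat =
  cObj  :: "'o set"
  cMor  :: "'m set"
  cDom  :: "'m \<Rightarrow> 'o"
  cCod  :: "'m \<Rightarrow> 'o"
  cId   :: "'o \<Rightarrow> 'm"
  cComp :: "'m \<Rightarrow> 'm \<Rightarrow> 'm"   (* cComp C g f = g \<circ> f *)

definition hom :: "('o,'m,'z) cat_scheme \<Rightarrow> 'o \<Rightarrow> 'o \<Rightarrow> 'm set" where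
  "hom C X Y = {f \<in> cMor C. cDom C f = X \<and> cCod C f = Y}"

definition is_category :: "('o,'m,'z) cat_scheme \<Rightarrow> bool" where
  "is_category C \<longleftrightarrow>
     (\<forall>f\<in>cMor C. cDom C f \<in> cObj C \<and> cCod C f \<in> cObj C) \<and>
     (\<forall>X\<in>cObj C. cId C X \<in> hom C X X) \<and>
     (\<forall>f\<in>cMor C. \<forall>g\<in>cMor C. cCod C f = cDom C g \<longrightarrow>
        cComp C g f \<in> hom C (cDom C f) (cCod C g)) \<and>
     (\<forall>f\<in>cMor C. cComp C (cId C (cCod C f)) f = f \<and> cComp C f (cId C (cDom C f)) = f) \<and>
     (\<forall>f\<in>cMor C. \<forall>g\<in>cMor C. \<forall>h\<in>cMor C. cCod C f = cDom C g \<and> cCod C g = cDom C h \<longrightarrow>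
        cComp C h (cComp C g f) = cComp C (cComp C h g) f)"

definition is_functor ::
  "('o,'m,'z) cat_scheme \<Rightarrow> ('p,'n,'y) cat_scheme \<Rightarrow> ('o \<Rightarrow> 'p) \<Rightarrow> ('m \<Rightarrow> 'n) \<Rightarrow> bool" where
  "is_functor C D Fo Fm \<longleftrightarrow>
     is_category C \<and> is_category D \<and>
     (\<forall>X\<in>cObj C. Fo X \<in> cObj D) \<and>
     (\<forall>f\<in>cMor C. Fm f \<in> hom D (Fo (cDom C f)) (Fo (cCod C f))) \<and>
     (\<forall>X\<in>cObj C. Fm (cId C X) = cId D (Fo X)) \<and>
     (\<forall>f\<in>cMor C. \<forall>g\<in>cMor C. cCod C f = cDom C g \<longrightarrow>
        Fm (cComp C g f) = cComp D (Fm g) (Fm f))"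

definition is_iso :: "('o,'m,'z) cat_scheme \<Rightarrow> 'm \<Rightarrow> bool" where
  "is_iso C f \<longleftrightarrow> f \<in> cMor C \<and>
     (\<exists>g\<in>hom C (cCod C f) (cDom C f).
        cComp C g f = cId C (cDom C f) \<and> cComp C f g = cId C (cCod C f))"

definition iso_inv :: "('o,'m,'z) cat_scheme \<Rightarrow> 'm \<Rightarrow> 'm" where
  "iso_inv C f = (THE g. g \<in> hom C (cCod C f) (cDom C f) \<and>
        cComp C g f = cId C (cDom C f) \<and> cComp C f g = cId C (cCod C f))"

definition ess_surj ::
  "('o,'m,'z) cat_scheme \<Rightarrow> ('p,'n,'y) cat_scheme \<Rightarrow> ('o \<Rightarrow> 'p) \<Rightarrow> bool" where
  "ess_surj C D Fo \<longleftrightarrow>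
     (\<forall>Y\<in>cObj D. \<exists>X\<in>cObj C. \<exists>h\<in>hom D (Fo X) Y. is_iso D h)"

definition is_equivalence ::
  "('o,'m,'z) cat_scheme \<Rightarrow> ('p,'n,'y) cat_scheme \<Rightarrow> ('o \<Rightarrow> 'p) \<Rightarrow> ('m \<Rightarrow> 'n) \<Rightarrow> bool" where
  "is_equivalence C D Fo Fm \<longleftrightarrow>
     is_functor C D Fo Fm \<and>
     (\<exists>(Go :: 'p \<Rightarrow> 'o) (Gm :: 'n \<Rightarrow> 'm) (eta :: 'o \<Rightarrow> 'm) (eps :: 'p \<Rightarrow> 'n).
        is_functor D C Go Gm \<and>
        (\<forall>X\<in>cObj C. eta X \<in> hom C X (Go (Fo X)) \<and> is_iso C (eta X)) \<and>
        (\<forall>f\<in>cMor C. cComp C (eta (cCod C f)) f = cComp C (Gm (Fm f)) (eta (cDom C f))) \<and>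
        (\<forall>Y\<in>cObj D. eps Y \<in> hom D (Fo (Go Y)) Y \<and> is_iso D (eps Y)) \<and>
        (\<forall>g\<in>cMor D. cComp D (eps (cCod D g)) (Fm (Gm g)) = cComp D g (eps (cDom D g))))"

definition omega :: "nat set" where
  "omega = {n. 1 \<le> n}"

text \<open>An injection u of omega is represented by the unique injective map nat \<Rightarrow> nat
  extending it with u 0 = 0.\<close>
definition EMmon :: "(nat \<Rightarrow> nat) set" where
  "EMmon = {u. inj u \<and> u 0 = 0}"

text \<open>pActM C u v f is the action of the unique morphism u \<rightarrow> v of E\<M> on f : X \<rightarrow> Y,
  a morphism u_* X \<rightarrow> v_* Y; pActO C u X = u_* X.\<close>
record ('o,'m) pcat = "('o,'m) cat" +
  pActO  :: "(nat \<Rightarrow> nat) \<Rightarrow> 'o \<Rightarrow> 'o"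
  pActM  :: "(nat \<Rightarrow> nat) \<Rightarrow> (nat \<Rightarrow> nat) \<Rightarrow> 'm \<Rightarrow> 'm"
  pZero  :: "'o"
  pPlusO :: "'o \<Rightarrow> 'o \<Rightarrow> 'o"
  pPlusM :: "'m \<Rightarrow> 'm \<Rightarrow> 'm"

text \<open>Strict action of the strict monoidal category E\<M> (tensor = composition),
  i.e. a functor E\<M> \<times> C \<rightarrow> C that is strictly unital and associative.\<close>
definition is_EM_category :: "('o,'m,'z) pcat_scheme \<Rightarrow> bool" where
  "is_EM_category C \<longleftrightarrow>
     is_category C \<and>
     (\<forall>u\<in>EMmon. \<forall>X\<in>cObj C. pActO C u X \<in> cObj C) \<and>
     (\<forall>u\<in>EMmon. \<forall>v\<in>EMmon. \<forall>f\<in>cMor C.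
        pActM C u v f \<in> hom C (pActO C u (cDom C f)) (pActO C v (cCod C f))) \<and>
     (\<forall>u\<in>EMmon. \<forall>X\<in>cObj C. pActM C u u (cId C X) = cId C (pActO C u X)) \<and>
     (\<forall>u\<in>EMmon. \<forall>v\<in>EMmon. \<forall>w\<in>EMmon. \<forall>f\<in>cMor C. \<forall>g\<in>cMor C. cCod C f = cDom C g \<longrightarrow>
        cComp C (pActM C v w g) (pActM C u v f) = pActM C u w (cComp C g f)) \<and>
     (\<forall>X\<in>cObj C. pActO C id X = X) \<and>
     (\<forall>f\<in>cMor C. pActM C id id f = f) \<and>
     (\<forall>u\<in>EMmon. \<forall>v\<in>EMmon. \<forall>X\<in>cObj C. pActO C (u \<circ> v) X = pActO C u (pActO C v X)) \<and>
     (\<forall>u\<in>EMmon. \<forall>u'\<in>EMmon. \<forall>v\<in>EMmon. \<forall>v'\<in>EMmon. \<forall>f\<in>cMor C.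
        pActM C (u \<circ> v) (u' \<circ> v') f = pActM C u u' (pActM C v v' f))"

text \<open>The structure isomorphism u_\<circ>^X : X \<rightarrow> u_* X (action of 1 \<rightarrow> u on id_X).\<close>
definition circ :: "('o,'m,'z) pcat_scheme \<Rightarrow> (nat \<Rightarrow> nat) \<Rightarrow> 'o \<Rightarrow> 'm" where
  "circ C u X = pActM C id u (cId C X)"

definition em_supp :: "('o,'m,'z) pcat_scheme \<Rightarrow> 'o \<Rightarrow> nat set" where
  "em_supp C X = omega \<inter> \<Inter>{A. finite A \<and> A \<subseteq> omega \<and>
      (\<forall>u\<in>EMmon. (\<forall>a\<in>A. u a = a) \<longrightarrow> pActO C u X = X)}"

definition is_tame :: "('o,'m,'z) pcat_scheme \<Rightarrow> bool" where
  "is_tame C \<longleftrightarrow> is_EM_category C \<and> (\<forall>X\<in>cObj C. finite (em_supp C X))"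

definition disj :: "('o,'m,'z) pcat_scheme \<Rightarrow> 'o \<Rightarrow> 'o \<Rightarrow> bool" where
  "disj C X Y \<longleftrightarrow> em_supp C X \<inter> em_supp C Y = {}"

text \<open>A pair of morphisms (f,g) is a morphism of C \<boxtimes> C.\<close>
definition disjM :: "('o,'m,'z) pcat_scheme \<Rightarrow> 'm \<Rightarrow> 'm \<Rightarrow> bool" where
  "disjM C f g \<longleftrightarrow> f \<in> cMor C \<and> g \<in> cMor C \<and>
     disj C (cDom C f) (cDom C g) \<and> disj C (cCod C f) (cCod C g)"

definition parsummable :: "('o,'m,'z) pcat_scheme \<Rightarrow> bool" where
  "parsummable C \<longleftrightarrow>
     is_tame C \<and>
     pZero C \<in> cObj C \<and> em_supp C (pZero C) = {} \<and>
     \<comment> \<open>+ is a functor C \<boxtimes> C \<rightarrow> C\<close>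
     (\<forall>X\<in>cObj C. \<forall>Y\<in>cObj C. disj C X Y \<longrightarrow> pPlusO C X Y \<in> cObj C) \<and>
     (\<forall>f g. disjM C f g \<longrightarrow>
        pPlusM C f g \<in> hom C (pPlusO C (cDom C f) (cDom C g)) (pPlusO C (cCod C f) (cCod C g))) \<and>
     (\<forall>X\<in>cObj C. \<forall>Y\<in>cObj C. disj C X Y \<longrightarrow>
        pPlusM C (cId C X) (cId C Y) = cId C (pPlusO C X Y)) \<and>
     (\<forall>f f' g g'. disjM C f f' \<and> disjM C g g' \<and> cCod C f = cDom C g \<and> cCod C f' = cDom C g' \<longrightarrow>
        pPlusM C (cComp C g f) (cComp C g' f') = cComp C (pPlusM C g g') (pPlusM C f f')) \<and>
     \<comment> \<open>strictly unital\<close>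
     (\<forall>X\<in>cObj C. pPlusO C (pZero C) X = X \<and> pPlusO C X (pZero C) = X) \<and>
     (\<forall>f\<in>cMor C. pPlusM C (cId C (pZero C)) f = f \<and> pPlusM C f (cId C (pZero C)) = f) \<and>
     \<comment> \<open>associative\<close>
     (\<forall>X\<in>cObj C. \<forall>Y\<in>cObj C. \<forall>Z\<in>cObj C. disj C X Y \<and> disj C X Z \<and> disj C Y Z \<longrightarrow>
        pPlusO C (pPlusO C X Y) Z = pPlusO C X (pPlusO C Y Z)) \<and>
     (\<forall>f g h. disjM C f g \<and> disjM C f h \<and> disjM C g h \<longrightarrow>
        pPlusM C (pPlusM C f g) h = pPlusM C f (pPlusM C g h)) \<and>
     \<comment> \<open>commutative\<close>
     (\<forall>X\<in>cObj C. \<forall>Y\<in>cObj C. disj C X Y \<longrightarrow> pPlusO C X Y = pPlusO C Y X) \<and>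
     (\<forall>f g. disjM C f g \<longrightarrow> pPlusM C f g = pPlusM C g f) \<and>
     \<comment> \<open>E\<M>-equivariant (diagonal action on C \<boxtimes> C)\<close>
     (\<forall>u\<in>EMmon. \<forall>X\<in>cObj C. \<forall>Y\<in>cObj C. disj C X Y \<longrightarrow>
        pActO C u (pPlusO C X Y) = pPlusO C (pActO C u X) (pActO C u Y)) \<and>
     (\<forall>u\<in>EMmon. \<forall>v\<in>EMmon. \<forall>f g. disjM C f g \<longrightarrow>
        pActM C u v (pPlusM C f g) = pPlusM C (pActM C u v f) (pActM C u v g))"

definition ps_morphism ::
  "('o,'m,'z) pcat_scheme \<Rightarrow> ('p,'n,'y) pcat_scheme \<Rightarrow> ('o \<Rightarrow> 'p) \<Rightarrow> ('m \<Rightarrow> 'n) \<Rightarrow> bool" where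
  "ps_morphism C D Go Gm \<longleftrightarrow>
     parsummable C \<and> parsummable D \<and> is_functor C D Go Gm \<and>
     (\<forall>u\<in>EMmon. \<forall>X\<in>cObj C. Go (pActO C u X) = pActO D u (Go X)) \<and>
     (\<forall>u\<in>EMmon. \<forall>v\<in>EMmon. \<forall>f\<in>cMor C. Gm (pActM C u v f) = pActM D u v (Gm f)) \<and>
     Go (pZero C) = pZero D \<and>
     (\<forall>X\<in>cObj C. \<forall>Y\<in>cObj C. disj C X Y \<longrightarrow> Go (pPlusO C X Y) = pPlusO D (Go X) (Go Y)) \<and>
     (\<forall>f g. disjM C f g \<longrightarrow> Gm (pPlusM C f g) = pPlusM D (Gm f) (Gm g))"

definition preserves_sums ::
  "('o,'m,'z) pcat_scheme \<Rightarrow> ('p,'n,'y) pcat_scheme \<Rightarrow> ('o \<Rightarrow> 'p) \<Rightarrow> ('m \<Rightarrow> 'n) \<Rightarrow> bool" where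
  "preserves_sums C D Fo Fm \<longleftrightarrow>
     Fo (pZero C) = pZero D \<and>
     (\<forall>X\<in>cObj C. \<forall>Y\<in>cObj C. disj C X Y \<longrightarrow> disj D (Fo X) (Fo Y)) \<and>
     (\<forall>f g. disjM C f g \<longrightarrow> disjM D (Fm f) (Fm g)) \<and>
     (\<forall>X\<in>cObj C. \<forall>Y\<in>cObj C. disj C X Y \<longrightarrow> Fo (pPlusO C X Y) = pPlusO D (Fo X) (Fo Y)) \<and>
     (\<forall>f g. disjM C f g \<longrightarrow> Fm (pPlusM C f g) = pPlusM D (Fm f) (Fm g))"

text \<open>A morphism X \<rightarrow> Y of F_* C is a triple (X, g, Y) with g \<in> Hom_D(F X, F Y).
  The E\<M>-action on morphisms is the one determined by the object action and the
  structure isomorphisms F(u_\<circ>^X): (u \<rightarrow> v)_* g = F(v_\<circ>^Y) \<circ> g \<circ> F(u_\<circ>^X)^{-1}.\<close>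
definition pushC ::
  "('o,'m,'z) pcat_scheme \<Rightarrow> ('p,'n,'y) pcat_scheme \<Rightarrow> ('o \<Rightarrow> 'p) \<Rightarrow> ('m \<Rightarrow> 'n)
     \<Rightarrow> ('o, 'o \<times> 'n \<times> 'o) pcat" where
  "pushC C D Fo Fm = \<lparr>
     cObj = cObj C,
     cMor = {(X, g, Y). X \<in> cObj C \<and> Y \<in> cObj C \<and> g \<in> hom D (Fo X) (Fo Y)},
     cDom = (\<lambda>(X, g, Y). X),
     cCod = (\<lambda>(X, g, Y). Y),
     cId = (\<lambda>X. (X, cId D (Fo X), X)),
     cComp = (\<lambda>(Y, g, Z) (X, f, Y'). (X, cComp D g f, Z)),
     pActO = pActO C,
     pActM = (\<lambda>u v (X, g, Y). (pActO C u X,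
                 cComp D (Fm (circ C v Y)) (cComp D g (iso_inv D (Fm (circ C u X)))),
                 pActO C v Y)),
     pZero = pZero C,
     pPlusO = pPlusO C,
     pPlusM = (\<lambda>(X, g, Y) (X', g', Y'). (pPlusO C X X', pPlusM D g g', pPlusO C Y Y')) \<rparr>"

definition I_mor :: "('o,'m,'z) pcat_scheme \<Rightarrow> ('m \<Rightarrow> 'n) \<Rightarrow> 'm \<Rightarrow> 'o \<times> 'n \<times> 'o" where
  "I_mor C Fm f = (cDom C f, Fm f, cCod C f)"

definition Fhat_mor :: "'o \<times> 'n \<times> 'o \<Rightarrow> 'n" where
  "Fhat_mor = (\<lambda>(X, g, Y). g)"

end

theory Submission
  imports Defs "HOL-Library.Countable_Set"
begin


lemma bij_to_infinite:
  fixes B P :: "nat set"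
  assumes "finite B" "infinite P"
  shows "\<exists>f. bij_betw f (- B) P"
proof -
  have "infinite (- B)" using assms(1)
    by (metis Compl_eq_Diff_UNIV Diff_infinite_finite infinite_UNIV_nat)
  then obtain e1 :: "nat \<Rightarrow> nat" where e1: "bij_betw e1 (-B) UNIV"
    using countableE_infinite[of "-B"] by auto
  obtain e2 :: "nat \<Rightarrow> nat" where e2: "bij_betw e2 P UNIV"
    using countableE_infinite[of P] assms(2) by auto
  have "bij_betw (the_inv_into P e2 \<circ> e1) (-B) P"
    using bij_betw_trans[OF e1 bij_betw_the_inv_into[OF e2]] .
  then show ?thesis by blast
qed

lemma EMmon_comp: "u \<in> EMmon \<Longrightarrow> v \<in> EMmon \<Longrightarrow> u \<circ> v \<in> EMmon"
  by (auto simp: EMmon_def inj_compose)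

lemma id_EMmon: "id \<in> EMmon"
  by (simp add: EMmon_def)

lemma common_factor:
  assumes u: "u \<in> EMmon" and t: "t \<in> EMmon" and B: "finite B" and agree: "\<forall>b\<in>B. u b = t b"
    and inf: "infinite (range u \<inter> range t)" and B0: "0 \<in> B"
  shows "\<exists>s\<in>EMmon. \<exists>s'\<in>EMmon. (\<forall>b\<in>B. s b = b) \<and> (\<forall>b\<in>B. s' b = b) \<and> u \<circ> s = t \<circ> s'"
proof -
  let ?P = "(range u \<inter> range t) - u ` B"
  have "infinite ?P" using inf B by simp
  then obtain f where f: "bij_betw f (- B) ?P" using bij_to_infinite B by blast
  define s where "s n = (if n \<in> B then n else inv u (f n))" for n
  define s' where "s' n = (if n \<in> B then n else inv t (f n))" for n
  have fP: "n \<notin> B \<Longrightarrow> f n \<in> ?P" for n using f by (auto simp: bij_betw_def)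
  have finj: "n \<notin> B \<Longrightarrow> m \<notin> B \<Longrightarrow> f n = f m \<Longrightarrow> n = m" for n m
    using f by (auto simp: bij_betw_def inj_on_def)
  have uu: "n \<notin> B \<Longrightarrow> u (inv u (f n)) = f n" for n using fP[of n] by (auto intro: f_inv_into_f)
  have tt: "n \<notin> B \<Longrightarrow> t (inv t (f n)) = f n" for n using fP[of n] by (auto intro: f_inv_into_f)
  have ui: "inj u" "inj t" using u t by (auto simp: EMmon_def)
  have sB: "s m \<notin> B" if m: "m \<notin> B" for m
  proof
    assume "s m \<in> B"
    then have "u (s m) \<in> u ` B" by blast
    then show False using uu[OF m] fP[OF m] m by (simp add: s_def)
  qed
  have s'B: "s' m \<notin> B" if m: "m \<notin> B" for m
  proof
    assume "s' m \<in> B"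
    then have "t (s' m) \<in> t ` B" by blast
    moreover have "t ` B = u ` B" using agree by (auto simp: image_def)
    ultimately show False using tt[OF m] fP[OF m] m by (simp add: s'_def)
  qed
  have "inj s"
  proof (rule injI)
    fix n m assume e: "s n = s m"
    show "n = m"
    proof (cases "n \<in> B")
      case n: True
      show ?thesis
      proof (cases "m \<in> B")
        case True then show ?thesis using e n by (simp add: s_def)
      next
        case False then show ?thesis using e n sB[OF False] by (simp add: s_def)
      qed
    next
      case n: False
      show ?thesis
      proof (cases "m \<in> B")
        case True then show ?thesis using e n sB[OF n] by (simp add: s_def)
      next
        case m: False
        have "u (s n) = u (s m)" using e by simp
        then have "f n = f m" using uu[OF n] uu[OF m] n m by (simp add: s_def)
        then show ?thesis using finj n m by blast
      qed
    qed
  qed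
  moreover have "inj s'"
  proof (rule injI)
    fix n m assume e: "s' n = s' m"
    show "n = m"
    proof (cases "n \<in> B")
      case n: True
      show ?thesis
      proof (cases "m \<in> B")
        case True then show ?thesis using e n by (simp add: s'_def)
      next
        case False then show ?thesis using e n s'B[OF False] by (simp add: s'_def)
      qed
    next
      case n: False
      show ?thesis
      proof (cases "m \<in> B")
        case True then show ?thesis using e n s'B[OF n] by (simp add: s'_def)
      next
        case m: False
        have "t (s' n) = t (s' m)" using e by simp
        then have "f n = f m" using tt[OF n] tt[OF m] n m by (simp add: s'_def)
        then show ?thesis using finj n m by blast
      qed
    qed
  qed
  moreover have "u \<circ> s = t \<circ> s'"
    using uu tt agree by (auto simp: s_def s'_def)
  ultimately show ?thesis using B0
    by (intro bexI[of _ s] bexI[of _ s']) (auto simp: EMmon_def s_def s'_def)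
qed

lemma mk_t:
  assumes u: "u \<in> EMmon" and u': "u' \<in> EMmon" and B: "finite B" "0 \<in> B"
    and agree: "\<forall>b\<in>B. u b = u' b"
  shows "\<exists>t\<in>EMmon. (\<forall>b\<in>B. t b = u b) \<and> range t = range u \<union> range u'"
proof -
  let ?P = "(range u \<union> range u') - u ` B"
  have iu: "inj u" using u by (auto simp: EMmon_def)
  have "infinite (range u)" using range_inj_infinite[OF iu] .
  then have "infinite ?P" using B by (metis Diff_infinite_finite finite_Un finite_imageI)
  then obtain f where f: "bij_betw f (- B) ?P" using bij_to_infinite B by blast
  define t where "t n = (if n \<in> B then u n else f n)" for n
  have fP: "n \<notin> B \<Longrightarrow> f n \<in> ?P" for n using f by (auto simp: bij_betw_def)
  have finj: "n \<notin> B \<Longrightarrow> m \<notin> B \<Longrightarrow> f n = f m \<Longrightarrow> n = m" for n m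
    using f by (auto simp: bij_betw_def inj_on_def)
  have tB: "t n \<in> u ` B" if "n \<in> B" for n using that by (simp add: t_def)
  have tnB: "t n \<notin> u ` B" if "n \<notin> B" for n using that fP[OF that] by (simp add: t_def)
  have "inj t"
  proof (rule injI)
    fix n m assume e: "t n = t m"
    show "n = m"
    proof (cases "n \<in> B")
      case n: True
      show ?thesis
      proof (cases "m \<in> B")
        case True then show ?thesis using e n iu by (simp add: t_def inj_eq)
      next
        case False then show ?thesis using e tB[OF n] tnB[OF False] by simp
      qed
    next
      case n: False
      show ?thesis
      proof (cases "m \<in> B")
        case True then show ?thesis using e tB[OF True] tnB[OF n] by simp
      next
        case m: False
        then show ?thesis using e n finj by (simp add: t_def)
      qed
    qed
  qed
  moreover have "range t = range u \<union> range u'"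
  proof
    show "range t \<subseteq> range u \<union> range u'" using fP by (auto simp: t_def)
    show "range u \<union> range u' \<subseteq> range t"
    proof
      fix z assume z: "z \<in> range u \<union> range u'"
      show "z \<in> range t"
      proof (cases "z \<in> u ` B")
        case True then show ?thesis by (auto simp: t_def)
      next
        case False
        then have "z \<in> ?P" using z by blast
        then obtain n where "n \<in> -B" "f n = z" using f by (metis bij_betw_imp_surj_on imageE)
        then show ?thesis by (metis ComplD rangeI t_def)
      qed
    qed
  qed
  ultimately show ?thesis using B u
    by (intro bexI[of _ t]) (auto simp: EMmon_def t_def)
qed

lemma factor_eq:
  assumes EM: "is_EM_category C" and X: "X \<in> cObj C"
    and supp: "\<forall>w\<in>EMmon. (\<forall>a\<in>A. w a = a) \<longrightarrow> pActO C w X = X"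
    and u: "u \<in> EMmon" and t: "t \<in> EMmon" and s: "s \<in> EMmon" and s': "s' \<in> EMmon"
    and sA: "\<forall>b\<in>A. s b = b" and s'A: "\<forall>b\<in>A. s' b = b" and eq: "u \<circ> s = t \<circ> s'"
  shows "pActO C u X = pActO C t X"
proof -
  have c: "\<forall>u\<in>EMmon. \<forall>v\<in>EMmon. \<forall>X\<in>cObj C. pActO C (u \<circ> v) X = pActO C u (pActO C v X)"
    using EM by (simp add: is_EM_category_def)
  have "pActO C u X = pActO C u (pActO C s X)" using supp s sA by simp
  also have "\<dots> = pActO C (u \<circ> s) X" using c u s X by simp
  also have "\<dots> = pActO C (t \<circ> s') X" using eq by simp
  also have "\<dots> = pActO C t (pActO C s' X)" using c t s' X by simp
  also have "\<dots> = pActO C t X" using supp s' s'A by simp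
  finally show ?thesis .
qed

lemma support_agree:
  assumes EM: "is_EM_category C" and X: "X \<in> cObj C" and A: "finite A"
    and supp: "\<forall>w\<in>EMmon. (\<forall>a\<in>A. w a = a) \<longrightarrow> pActO C w X = X"
    and u: "u \<in> EMmon" and u': "u' \<in> EMmon" and agree: "\<forall>a\<in>A. u a = u' a"
  shows "pActO C u X = pActO C u' X"
proof -
  let ?B = "insert 0 A"
  have B: "finite ?B" "0 \<in> ?B" using A by auto
  have agB: "\<forall>b\<in>?B. u b = u' b" using agree u u' by (auto simp: EMmon_def)
  obtain t where t: "t \<in> EMmon" "\<forall>b\<in>?B. t b = u b" "range t = range u \<union> range u'"
    using mk_t[OF u u' B(1) B(2) agB] by blast
  have iu: "infinite (range u)" "infinite (range u')" using u u'
    by (auto simp: EMmon_def range_inj_infinite)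
  have supB: "\<forall>w\<in>EMmon. (\<forall>a\<in>?B. w a = a) \<longrightarrow> pActO C w X = X" using supp by auto
  obtain s1 s2 where s12: "s1 \<in> EMmon" "s2 \<in> EMmon" "\<forall>b\<in>?B. s1 b = b" "\<forall>b\<in>?B. s2 b = b" "u \<circ> s1 = t \<circ> s2"
    using common_factor[OF u t(1) B(1) _ _ B(2)] t iu by (metis Int_absorb2 sup_ge1)
  obtain s3 s4 where s34: "s3 \<in> EMmon" "s4 \<in> EMmon" "\<forall>b\<in>?B. s3 b = b" "\<forall>b\<in>?B. s4 b = b" "t \<circ> s3 = u' \<circ> s4"
    using common_factor[OF t(1) u' B(1) _ _ B(2)] t iu agB by (metis Int_absorb1 sup_ge2)
  have "pActO C u X = pActO C t X"
    using factor_eq[OF EM X supB u t(1) s12] .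
  also have "\<dots> = pActO C u' X"
    using factor_eq[OF EM X supB t(1) u' s34] .
  finally show ?thesis .
qed

lemma omega_infinite: "infinite omega"
proof -
  have "omega = {1..}" by (auto simp: omega_def)
  then show ?thesis using infinite_Ici[of "1::nat"] by metis
qed

lemma EMmon_omega: "u \<in> EMmon \<Longrightarrow> a \<in> omega \<Longrightarrow> u a \<in> omega"
  unfolding EMmon_def omega_def by (auto dest: injD) (metis One_nat_def injD less_one not_less)

lemma supp_act:
  assumes tame: "is_tame C" and X: "X \<in> cObj C" and u: "u \<in> EMmon"
  shows "em_supp C (pActO C u X) \<subseteq> u ` em_supp C X"
proof
  have EM: "is_EM_category C" using tame by (simp add: is_tame_def)
  have c: "\<forall>u\<in>EMmon. \<forall>v\<in>EMmon. \<forall>X\<in>cObj C. pActO C (u \<circ> v) X = pActO C u (pActO C v X)"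
    using EM by (simp add: is_EM_category_def)
  define Fam where "Fam Y = {A. finite A \<and> A \<subseteq> omega \<and>
      (\<forall>u\<in>EMmon. (\<forall>a\<in>A. u a = a) \<longrightarrow> pActO C u Y = Y)}" for Y
  have es: "em_supp C Y = omega \<inter> \<Inter>(Fam Y)" for Y by (simp add: em_supp_def Fam_def)
  have "Fam X \<noteq> {}"
  proof
    assume "Fam X = {}"
    then have "em_supp C X = omega" using es by simp
    moreover have "finite (em_supp C X)" using tame X by (simp add: is_tame_def)
    ultimately show False using omega_infinite by simp
  qed
  then obtain A0 where A0: "A0 \<in> Fam X" by blast
  have img: "u ` A \<in> Fam (pActO C u X)" if A: "A \<in> Fam X" for A
  proof -
    have "finite (u ` A)" "u ` A \<subseteq> omega" using A EMmon_omega[OF u] by (auto simp: Fam_def)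
    moreover have "pActO C w (pActO C u X) = pActO C u X"
      if w: "w \<in> EMmon" "\<forall>a\<in>u ` A. w a = a" for w
    proof -
      have "pActO C w (pActO C u X) = pActO C (w \<circ> u) X" using c w u X by simp
      also have "\<dots> = pActO C u X"
        using support_agree[OF EM X _ _ EMmon_comp[OF w(1) u] u] A w by (auto simp: Fam_def)
      finally show ?thesis .
    qed
    ultimately show ?thesis by (simp add: Fam_def)
  qed
  fix z assume z: "z \<in> em_supp C (pActO C u X)"
  then have zA: "z \<in> u ` A" if "A \<in> Fam X" for A using img[OF that] es by blast
  obtain y where y: "y \<in> A0" "z = u y" using zA[OF A0] by blast
  have iu: "inj u" using u by (simp add: EMmon_def)
  have "y \<in> A" if "A \<in> Fam X" for A
    using zA[OF that] y iu by (auto dest: injD)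
  moreover have "y \<in> omega" using A0 y by (auto simp: Fam_def)
  ultimately show "z \<in> u ` em_supp C X" using y es by blast
qed

lemma disj_act:
  assumes tame: "is_tame C" and X: "X \<in> cObj C" and Y: "Y \<in> cObj C" and u: "u \<in> EMmon"
    and d: "disj C X Y"
  shows "disj C (pActO C u X) (pActO C u Y)"
proof -
  have iu: "inj u" using u by (simp add: EMmon_def)
  have "u ` em_supp C X \<inter> u ` em_supp C Y = {}"
    using d iu by (auto simp: disj_def dest: injD)
  then show ?thesis using supp_act[OF tame X u] supp_act[OF tame Y u]
    by (auto simp: disj_def)
qed



lemma homI: "f \<in> cMor C \<Longrightarrow> cDom C f = X \<Longrightarrow> cCod C f = Y \<Longrightarrow> f \<in> hom C X Y"
  by (simp add: hom_def)
lemma homD: "f \<in> hom C X Y \<Longrightarrow> f \<in> cMor C \<and> cDom C f = X \<and> cCod C f = Y"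
  by (simp add: hom_def)
lemma hom_self: "f \<in> cMor C \<Longrightarrow> f \<in> hom C (cDom C f) (cCod C f)"
  by (simp add: hom_def)

lemma cat_id: "is_category C \<Longrightarrow> X \<in> cObj C \<Longrightarrow> cId C X \<in> hom C X X"
  by (simp add: is_category_def)
lemma cat_comp: "is_category C \<Longrightarrow> f \<in> hom C X Y \<Longrightarrow> g \<in> hom C Y Z \<Longrightarrow> cComp C g f \<in> hom C X Z"
  unfolding is_category_def hom_def by auto
lemma cat_idl: "is_category C \<Longrightarrow> f \<in> hom C X Y \<Longrightarrow> cComp C (cId C Y) f = f"
  unfolding is_category_def hom_def by auto
lemma cat_idr: "is_category C \<Longrightarrow> f \<in> hom C X Y \<Longrightarrow> cComp C f (cId C X) = f"
  unfolding is_category_def hom_def by auto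
lemma cat_assoc: "is_category C \<Longrightarrow> f \<in> hom C W X \<Longrightarrow> g \<in> hom C X Y \<Longrightarrow> h \<in> hom C Y Z \<Longrightarrow>
   cComp C h (cComp C g f) = cComp C (cComp C h g) f"
  unfolding is_category_def hom_def by auto
lemma cat_obj: "is_category C \<Longrightarrow> f \<in> hom C X Y \<Longrightarrow> X \<in> cObj C \<and> Y \<in> cObj C"
  unfolding is_category_def hom_def by auto

lemma iso_inv_eq:
  assumes C: "is_category C" and f: "f \<in> hom C X Y" and g: "g \<in> hom C Y X"
    and gf: "cComp C g f = cId C X" and fg: "cComp C f g = cId C Y"
  shows "iso_inv C f = g"
proof -
  have df: "cDom C f = X" "cCod C f = Y" using f by (auto simp: hom_def)
  show ?thesis unfolding iso_inv_def df
  proof (rule the_equality)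
    show "g \<in> hom C Y X \<and> cComp C g f = cId C X \<and> cComp C f g = cId C Y" using g gf fg by simp
    fix g' assume g': "g' \<in> hom C Y X \<and> cComp C g' f = cId C X \<and> cComp C f g' = cId C Y"
    have "g' = cComp C g' (cId C Y)" using cat_idr[OF C] g' by metis
    also have "\<dots> = cComp C g' (cComp C f g)" using fg by simp
    also have "\<dots> = cComp C (cComp C g' f) g" using cat_assoc[OF C g f] g' by blast
    also have "\<dots> = g" using g' cat_idl[OF C g] by simp
    finally show "g' = g" .
  qed
qed

lemma is_isoI:
  assumes C: "is_category C" and f: "f \<in> hom C X Y" and g: "g \<in> hom C Y X"
    and gf: "cComp C g f = cId C X" and fg: "cComp C f g = cId C Y"
  shows "is_iso C f"
  using assms unfolding is_iso_def hom_def by auto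

lemma iso_inv_props:
  assumes C: "is_category C" and i: "is_iso C f" and f: "f \<in> hom C X Y"
  shows "iso_inv C f \<in> hom C Y X" "cComp C (iso_inv C f) f = cId C X" "cComp C f (iso_inv C f) = cId C Y"
proof -
  have df: "cDom C f = X" "cCod C f = Y" using f by (auto simp: hom_def)
  obtain g where g: "g \<in> hom C Y X" "cComp C g f = cId C X" "cComp C f g = cId C Y"
    using i df unfolding is_iso_def by auto
  have "iso_inv C f = g" using iso_inv_eq[OF C f g] .
  then show "iso_inv C f \<in> hom C Y X" "cComp C (iso_inv C f) f = cId C X" "cComp C f (iso_inv C f) = cId C Y"
    using g by auto
qed

lemma fun_obj: "is_functor C D Fo Fm \<Longrightarrow> X \<in> cObj C \<Longrightarrow> Fo X \<in> cObj D"
  by (simp add: is_functor_def)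
lemma fun_hom: "is_functor C D Fo Fm \<Longrightarrow> f \<in> hom C X Y \<Longrightarrow> Fm f \<in> hom D (Fo X) (Fo Y)"
  unfolding is_functor_def hom_def by auto
lemma fun_id: "is_functor C D Fo Fm \<Longrightarrow> X \<in> cObj C \<Longrightarrow> Fm (cId C X) = cId D (Fo X)"
  by (simp add: is_functor_def)
lemma fun_comp: "is_functor C D Fo Fm \<Longrightarrow> f \<in> hom C X Y \<Longrightarrow> g \<in> hom C Y Z \<Longrightarrow>
   Fm (cComp C g f) = cComp D (Fm g) (Fm f)"
  unfolding is_functor_def hom_def by auto
lemma fun_cats: "is_functor C D Fo Fm \<Longrightarrow> is_category C \<and> is_category D"
  by (simp add: is_functor_def)

section \<open>EM categories\<close>

definition cinv :: "('o,'m,'z) pcat_scheme \<Rightarrow> (nat \<Rightarrow> nat) \<Rightarrow> 'o \<Rightarrow> 'm" where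
  "cinv C u X = pActM C u id (cId C X)"

context
  fixes C :: "('o,'m,'z) pcat_scheme"
  assumes EM: "is_EM_category C"
begin

lemma em_cat: "is_category C" using EM by (simp add: is_EM_category_def)
lemma em_actO: "u \<in> EMmon \<Longrightarrow> X \<in> cObj C \<Longrightarrow> pActO C u X \<in> cObj C"
  using EM by (simp add: is_EM_category_def)
lemma em_actM: "u \<in> EMmon \<Longrightarrow> v \<in> EMmon \<Longrightarrow> f \<in> hom C X Y \<Longrightarrow> pActM C u v f \<in> hom C (pActO C u X) (pActO C v Y)"
  using EM unfolding is_EM_category_def hom_def by auto
lemma em_actM_id: "u \<in> EMmon \<Longrightarrow> X \<in> cObj C \<Longrightarrow> pActM C u u (cId C X) = cId C (pActO C u X)"
  using EM by (simp add: is_EM_category_def)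
lemma em_actM_comp: "u \<in> EMmon \<Longrightarrow> v \<in> EMmon \<Longrightarrow> w \<in> EMmon \<Longrightarrow> f \<in> hom C X Y \<Longrightarrow> g \<in> hom C Y Z \<Longrightarrow>
  cComp C (pActM C v w g) (pActM C u v f) = pActM C u w (cComp C g f)"
  using EM unfolding is_EM_category_def hom_def by auto
lemma em_idO: "X \<in> cObj C \<Longrightarrow> pActO C id X = X"
  using EM by (simp add: is_EM_category_def)
lemma em_idM: "f \<in> cMor C \<Longrightarrow> pActM C id id f = f"
  using EM by (simp add: is_EM_category_def)
lemma em_compO: "u \<in> EMmon \<Longrightarrow> v \<in> EMmon \<Longrightarrow> X \<in> cObj C \<Longrightarrow> pActO C (u \<circ> v) X = pActO C u (pActO C v X)"
  using EM by (simp add: is_EM_category_def)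
lemma em_compM: "u \<in> EMmon \<Longrightarrow> u' \<in> EMmon \<Longrightarrow> v \<in> EMmon \<Longrightarrow> v' \<in> EMmon \<Longrightarrow> f \<in> cMor C \<Longrightarrow>
  pActM C (u \<circ> v) (u' \<circ> v') f = pActM C u u' (pActM C v v' f)"
  using EM by (simp add: is_EM_category_def)

lemma circ_hom: "u \<in> EMmon \<Longrightarrow> X \<in> cObj C \<Longrightarrow> circ C u X \<in> hom C X (pActO C u X)"
  unfolding circ_def using em_actM[OF id_EMmon _ cat_id[OF em_cat]] em_idO by metis
lemma cinv_hom: "u \<in> EMmon \<Longrightarrow> X \<in> cObj C \<Longrightarrow> cinv C u X \<in> hom C (pActO C u X) X"
  unfolding cinv_def using em_actM[OF _ id_EMmon cat_id[OF em_cat]] em_idO by metis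
lemma circ_cinv: "u \<in> EMmon \<Longrightarrow> X \<in> cObj C \<Longrightarrow> cComp C (circ C u X) (cinv C u X) = cId C (pActO C u X)"
  unfolding circ_def cinv_def
  using em_actM_comp[OF _ id_EMmon _ cat_id[OF em_cat] cat_id[OF em_cat]] cat_idl[OF em_cat cat_id[OF em_cat]]
    em_actM_id by metis
lemma cinv_circ: "u \<in> EMmon \<Longrightarrow> X \<in> cObj C \<Longrightarrow> cComp C (cinv C u X) (circ C u X) = cId C X"
  unfolding circ_def cinv_def
  using em_actM_comp[OF id_EMmon _ id_EMmon cat_id[OF em_cat] cat_id[OF em_cat]] cat_idl[OF em_cat cat_id[OF em_cat]]
    em_actM_id[OF id_EMmon] em_idO by metis
lemma circ_id: "X \<in> cObj C \<Longrightarrow> circ C id X = cId C X"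
  unfolding circ_def using em_idM cat_id[OF em_cat] homD by metis
lemma cinv_id: "X \<in> cObj C \<Longrightarrow> cinv C id X = cId C X"
  unfolding cinv_def using em_idM cat_id[OF em_cat] homD by metis

lemma actM_circ: "u \<in> EMmon \<Longrightarrow> v \<in> EMmon \<Longrightarrow> f \<in> hom C X Y \<Longrightarrow>
   cComp C (pActM C u v f) (circ C u X) = cComp C (circ C v Y) f"
proof -
  assume u: "u \<in> EMmon" and v: "v \<in> EMmon" and f: "f \<in> hom C X Y"
  have X: "X \<in> cObj C" and Y: "Y \<in> cObj C" using cat_obj[OF em_cat f] by auto
  have "cComp C (pActM C u v f) (circ C u X) = pActM C id v (cComp C f (cId C X))"
    unfolding circ_def using em_actM_comp[OF id_EMmon u v cat_id[OF em_cat X] f] .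
  also have "\<dots> = pActM C id v f" using cat_idr[OF em_cat f] by simp
  also have "\<dots> = pActM C id v (cComp C (cId C Y) f)" using cat_idl[OF em_cat f] by simp
  also have "\<dots> = cComp C (circ C v Y) (pActM C id id f)"
    unfolding circ_def using em_actM_comp[OF id_EMmon id_EMmon v f cat_id[OF em_cat Y]] by simp
  also have "\<dots> = cComp C (circ C v Y) f" using em_idM f homD by metis
  finally show ?thesis .
qed

lemma actM_decomp: "u \<in> EMmon \<Longrightarrow> v \<in> EMmon \<Longrightarrow> f \<in> hom C X Y \<Longrightarrow>
   pActM C u v f = cComp C (circ C v Y) (cComp C f (cinv C u X))"
proof -
  assume u: "u \<in> EMmon" and v: "v \<in> EMmon" and f: "f \<in> hom C X Y"
  have X: "X \<in> cObj C" and Y: "Y \<in> cObj C" using cat_obj[OF em_cat f] by auto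
  have a: "pActM C u v f \<in> hom C (pActO C u X) (pActO C v Y)" using em_actM[OF u v f] .
  have "pActM C u v f = cComp C (pActM C u v f) (cComp C (circ C u X) (cinv C u X))"
    using circ_cinv[OF u X] cat_idr[OF em_cat a] by simp
  also have "\<dots> = cComp C (cComp C (pActM C u v f) (circ C u X)) (cinv C u X)"
    using cat_assoc[OF em_cat cinv_hom[OF u X] circ_hom[OF u X] a] .
  also have "\<dots> = cComp C (cComp C (circ C v Y) f) (cinv C u X)" using actM_circ[OF u v f] by simp
  also have "\<dots> = cComp C (circ C v Y) (cComp C f (cinv C u X))"
    using cat_assoc[OF em_cat cinv_hom[OF u X] f circ_hom[OF v Y]] by simp
  finally show ?thesis .
qed

lemma circ_o: "u \<in> EMmon \<Longrightarrow> v \<in> EMmon \<Longrightarrow> Y \<in> cObj C \<Longrightarrow>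
  circ C (u \<circ> v) Y = cComp C (circ C u (pActO C v Y)) (circ C v Y)"
proof -
  assume u: "u \<in> EMmon" and v: "v \<in> EMmon" and Y: "Y \<in> cObj C"
  have h: "circ C v Y \<in> hom C Y (pActO C v Y)" using circ_hom[OF v Y] .
  have "circ C (u \<circ> v) Y = pActM C (id \<circ> id) (u \<circ> v) (cId C Y)" by (simp add: circ_def)
  also have "\<dots> = pActM C id u (circ C v Y)"
    unfolding circ_def using em_compM[OF id_EMmon u id_EMmon v] cat_id[OF em_cat Y] homD by metis
  also have "\<dots> = cComp C (circ C u (pActO C v Y)) (circ C v Y)"
    using actM_decomp[OF id_EMmon u h] cinv_id[OF Y] cat_idr[OF em_cat h] by simp
  finally show ?thesis .
qed

lemma cinv_o: "u \<in> EMmon \<Longrightarrow> v \<in> EMmon \<Longrightarrow> X \<in> cObj C \<Longrightarrow>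
  cinv C (u \<circ> v) X = cComp C (cinv C v X) (cinv C u (pActO C v X))"
proof -
  assume u: "u \<in> EMmon" and v: "v \<in> EMmon" and X: "X \<in> cObj C"
  have h: "cinv C v X \<in> hom C (pActO C v X) X" using cinv_hom[OF v X] .
  have "cinv C (u \<circ> v) X = pActM C (u \<circ> v) (id \<circ> id) (cId C X)" by (simp add: cinv_def)
  also have "\<dots> = pActM C u id (cinv C v X)"
    unfolding cinv_def using em_compM[OF u id_EMmon v id_EMmon] cat_id[OF em_cat X] homD by metis
  also have "\<dots> = cComp C (cinv C v X) (cinv C u (pActO C v X))"
    using actM_decomp[OF u id_EMmon h] circ_id[OF X] cat_idl[OF em_cat] cat_comp[OF em_cat cinv_hom[OF u] h]
      em_actO[OF v X] by metis
  finally show ?thesis .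
qed

end



context
  fixes C :: "('o,'m,'z) pcat_scheme"
  assumes PS: "parsummable C"
begin
lemma ps_tame: "is_tame C" using PS by (simp add: parsummable_def)
lemma ps_EM: "is_EM_category C" using ps_tame by (simp add: is_tame_def)
lemma ps_cat: "is_category C" using em_cat[OF ps_EM] .
lemma ps_zero: "pZero C \<in> cObj C" "em_supp C (pZero C) = {}" using PS by (simp_all add: parsummable_def)
lemma ps_plusO: "X \<in> cObj C \<Longrightarrow> Y \<in> cObj C \<Longrightarrow> disj C X Y \<Longrightarrow> pPlusO C X Y \<in> cObj C"
  using PS by (simp add: parsummable_def)
lemma ps_plusM: "disjM C f g \<Longrightarrow>
   pPlusM C f g \<in> hom C (pPlusO C (cDom C f) (cDom C g)) (pPlusO C (cCod C f) (cCod C g))"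
  using PS by (simp add: parsummable_def)
lemma ps_plusId: "X \<in> cObj C \<Longrightarrow> Y \<in> cObj C \<Longrightarrow> disj C X Y \<Longrightarrow>
        pPlusM C (cId C X) (cId C Y) = cId C (pPlusO C X Y)"
  using PS by (simp add: parsummable_def)
lemma ps_inter: "disjM C f f' \<Longrightarrow> disjM C g g' \<Longrightarrow> cCod C f = cDom C g \<Longrightarrow> cCod C f' = cDom C g' \<Longrightarrow>
        pPlusM C (cComp C g f) (cComp C g' f') = cComp C (pPlusM C g g') (pPlusM C f f')"
proof -
  assume a: "disjM C f f'" "disjM C g g'" "cCod C f = cDom C g" "cCod C f' = cDom C g'"
  have "\<forall>f f' g g'. disjM C f f' \<and> disjM C g g' \<and> cCod C f = cDom C g \<and> cCod C f' = cDom C g' \<longrightarrow>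
        pPlusM C (cComp C g f) (cComp C g' f') = cComp C (pPlusM C g g') (pPlusM C f f')"
    using PS unfolding parsummable_def by (elim conjE) assumption
  then show ?thesis using a by blast
qed
lemma ps_unitO: "X \<in> cObj C \<Longrightarrow> pPlusO C (pZero C) X = X \<and> pPlusO C X (pZero C) = X"
  using PS by (simp add: parsummable_def)
lemma ps_unitM: "f \<in> cMor C \<Longrightarrow> pPlusM C (cId C (pZero C)) f = f \<and> pPlusM C f (cId C (pZero C)) = f"
  using PS by (simp add: parsummable_def)
lemma ps_assocM: "disjM C f g \<Longrightarrow> disjM C f h \<Longrightarrow> disjM C g h \<Longrightarrow>
        pPlusM C (pPlusM C f g) h = pPlusM C f (pPlusM C g h)"
  using PS unfolding parsummable_def by blast
lemma ps_commM: "disjM C f g \<Longrightarrow> pPlusM C f g = pPlusM C g f"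
  using PS unfolding parsummable_def by blast
lemma ps_eqM: "u \<in> EMmon \<Longrightarrow> v \<in> EMmon \<Longrightarrow> disjM C f g \<Longrightarrow>
        pActM C u v (pPlusM C f g) = pPlusM C (pActM C u v f) (pActM C u v g)"
  using PS unfolding parsummable_def by blast
lemma ps_eqO: "u \<in> EMmon \<Longrightarrow> X \<in> cObj C \<Longrightarrow> Y \<in> cObj C \<Longrightarrow> disj C X Y \<Longrightarrow>
        pActO C u (pPlusO C X Y) = pPlusO C (pActO C u X) (pActO C u Y)"
  using PS unfolding parsummable_def by blast

lemma ps_circ_plus: "u \<in> EMmon \<Longrightarrow> X \<in> cObj C \<Longrightarrow> Y \<in> cObj C \<Longrightarrow> disj C X Y \<Longrightarrow>
   circ C u (pPlusO C X Y) = pPlusM C (circ C u X) (circ C u Y)"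
  unfolding circ_def using ps_plusId ps_eqM[OF id_EMmon] cat_id[OF ps_cat] homD
  by (metis disjM_def)
lemma ps_cinv_plus: "u \<in> EMmon \<Longrightarrow> X \<in> cObj C \<Longrightarrow> Y \<in> cObj C \<Longrightarrow> disj C X Y \<Longrightarrow>
   cinv C u (pPlusO C X Y) = pPlusM C (cinv C u X) (cinv C u Y)"
  unfolding cinv_def using ps_plusId ps_eqM[OF _ id_EMmon] cat_id[OF ps_cat] homD
  by (metis disjM_def)
end

lemma disjM_hom: "f \<in> hom C X Y \<Longrightarrow> g \<in> hom C X' Y' \<Longrightarrow> disj C X X' \<Longrightarrow> disj C Y Y' \<Longrightarrow> disjM C f g"
  by (simp add: disjM_def hom_def)

section \<open>The push-forward\<close>

locale L =
  fixes C :: "('a,'b) pcat" and D :: "('c,'d) pcat" and Fo :: "'a \<Rightarrow> 'c" and Fm :: "'b \<Rightarrow> 'd"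
  assumes pC: "parsummable C" and pD: "parsummable D"
    and F: "is_functor C D Fo Fm" and S: "preserves_sums C D Fo Fm"
begin

abbreviation "P \<equiv> pushC C D Fo Fm"

lemma cC: "is_category C" using ps_cat[OF pC] .
lemma cD: "is_category D" using ps_cat[OF pD] .
lemma emC: "is_EM_category C" using ps_EM[OF pC] .

lemma P_simps:
  "cObj P = cObj C"
  "(X, g, Y) \<in> cMor P \<longleftrightarrow> X \<in> cObj C \<and> Y \<in> cObj C \<and> g \<in> hom D (Fo X) (Fo Y)"
  "cDom P (X, g, Y) = X"
  "cCod P (X, g, Y) = Y"
  "cId P X = (X, cId D (Fo X), X)"
  "cComp P (Y, g, Z) (X, f, Y') = (X, cComp D g f, Z)"
  "pActO P = pActO C"
  "pActM P u v (X, g, Y) = (pActO C u X,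
                 cComp D (Fm (circ C v Y)) (cComp D g (iso_inv D (Fm (circ C u X)))), pActO C v Y)"
  "pZero P = pZero C"
  "pPlusO P = pPlusO C"
  "pPlusM P (X, g, Y) (X', g', Y') = (pPlusO C X X', pPlusM D g g', pPlusO C Y Y')"
  by (simp_all add: pushC_def)

lemma P_hom: "(X', g, Y') \<in> hom P X Y \<longleftrightarrow> X' = X \<and> Y' = Y \<and> X \<in> cObj C \<and> Y \<in> cObj C \<and> g \<in> hom D (Fo X) (Fo Y)"
  by (auto simp: hom_def P_simps)

lemma P_supp: "em_supp P = em_supp C"
  by (simp add: em_supp_def[abs_def] P_simps)
lemma P_disj: "disj P = disj C"
  by (simp add: disj_def[abs_def] P_supp)

lemma Fc_hom: "u \<in> EMmon \<Longrightarrow> X \<in> cObj C \<Longrightarrow> Fm (circ C u X) \<in> hom D (Fo X) (Fo (pActO C u X))"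
  using fun_hom[OF F circ_hom[OF emC]] by blast
lemma Fi_hom: "u \<in> EMmon \<Longrightarrow> X \<in> cObj C \<Longrightarrow> Fm (cinv C u X) \<in> hom D (Fo (pActO C u X)) (Fo X)"
  using fun_hom[OF F cinv_hom[OF emC]] by blast
lemma Fc_Fi: "u \<in> EMmon \<Longrightarrow> X \<in> cObj C \<Longrightarrow> cComp D (Fm (circ C u X)) (Fm (cinv C u X)) = cId D (Fo (pActO C u X))"
  using fun_comp[OF F cinv_hom[OF emC] circ_hom[OF emC]] circ_cinv[OF emC] fun_id[OF F] em_actO[OF emC]
  by metis
lemma Fi_Fc: "u \<in> EMmon \<Longrightarrow> X \<in> cObj C \<Longrightarrow> cComp D (Fm (cinv C u X)) (Fm (circ C u X)) = cId D (Fo X)"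
  using fun_comp[OF F circ_hom[OF emC] cinv_hom[OF emC]] cinv_circ[OF emC] fun_id[OF F]
  by metis
lemma iso_Fc: "u \<in> EMmon \<Longrightarrow> X \<in> cObj C \<Longrightarrow> iso_inv D (Fm (circ C u X)) = Fm (cinv C u X)"
  using iso_inv_eq[OF cD Fc_hom Fi_hom Fi_Fc Fc_Fi] by blast

lemma actP: "u \<in> EMmon \<Longrightarrow> X \<in> cObj C \<Longrightarrow> pActM P u v (X, g, Y) = (pActO C u X,
                 cComp D (Fm (circ C v Y)) (cComp D g (Fm (cinv C u X))), pActO C v Y)"
  by (simp add: P_simps iso_Fc)

lemma mor_cases: "f \<in> cMor P \<Longrightarrow> (\<And>X g Y. f = (X, g, Y) \<Longrightarrow> X \<in> cObj C \<Longrightarrow> Y \<in> cObj C \<Longrightarrow> g \<in> hom D (Fo X) (Fo Y) \<Longrightarrow> R) \<Longrightarrow> R"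
  by (cases f) (auto simp: P_simps)

lemma P_cat: "is_category P"
  unfolding is_category_def
proof (intro conjI ballI impI)
  fix f assume "f \<in> cMor P" then show "cDom P f \<in> cObj P" "cCod P f \<in> cObj P"
    by (auto elim!: mor_cases simp: P_simps)
next
  fix X assume "X \<in> cObj P" then show "cId P X \<in> hom P X X"
    by (auto simp: P_simps P_hom intro: cat_id[OF cD] fun_obj[OF F])
next
  fix f g assume "f \<in> cMor P" "g \<in> cMor P" "cCod P f = cDom P g"
  then show "cComp P g f \<in> hom P (cDom P f) (cCod P g)"
    by (auto elim!: mor_cases simp: P_simps P_hom intro: cat_comp[OF cD])
next
  fix f assume "f \<in> cMor P" then show "cComp P (cId P (cCod P f)) f = f" "cComp P f (cId P (cDom P f)) = f"
    by (auto elim!: mor_cases simp: P_simps cat_idl[OF cD] cat_idr[OF cD])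
next
  fix f g h assume "f \<in> cMor P" "g \<in> cMor P" "h \<in> cMor P" "cCod P f = cDom P g \<and> cCod P g = cDom P h"
  then show "cComp P h (cComp P g f) = cComp P (cComp P h g) f"
    by (auto elim!: mor_cases simp: P_simps cat_assoc[OF cD])
qed


lemma Dsimps:
  "f \<in> cMor D \<Longrightarrow> g \<in> cMor D \<Longrightarrow> cCod D f = cDom D g \<Longrightarrow> cComp D g f \<in> cMor D"
  "f \<in> cMor D \<Longrightarrow> g \<in> cMor D \<Longrightarrow> cCod D f = cDom D g \<Longrightarrow> cDom D (cComp D g f) = cDom D f"
  "f \<in> cMor D \<Longrightarrow> g \<in> cMor D \<Longrightarrow> cCod D f = cDom D g \<Longrightarrow> cCod D (cComp D g f) = cCod D g"
  "f \<in> cMor D \<Longrightarrow> g \<in> cMor D \<Longrightarrow> h \<in> cMor D \<Longrightarrow> cCod D f = cDom D g \<Longrightarrow> cCod D g = cDom D h \<Longrightarrow>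
     cComp D (cComp D h g) f = cComp D h (cComp D g f)"
  "f \<in> cMor D \<Longrightarrow> cCod D f = Y \<Longrightarrow> cComp D (cId D Y) f = f"
  "f \<in> cMor D \<Longrightarrow> cDom D f = X \<Longrightarrow> cComp D f (cId D X) = f"
  "Y \<in> cObj D \<Longrightarrow> cId D Y \<in> cMor D"
  "Y \<in> cObj D \<Longrightarrow> cDom D (cId D Y) = Y"
  "Y \<in> cObj D \<Longrightarrow> cCod D (cId D Y) = Y"
  using cD unfolding is_category_def hom_def by auto

lemma Fsimps:
  "X \<in> cObj C \<Longrightarrow> Fo X \<in> cObj D"
  "u \<in> EMmon \<Longrightarrow> X \<in> cObj C \<Longrightarrow> pActO C u X \<in> cObj C"
  "u \<in> EMmon \<Longrightarrow> X \<in> cObj C \<Longrightarrow> Fm (circ C u X) \<in> cMor D"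
  "u \<in> EMmon \<Longrightarrow> X \<in> cObj C \<Longrightarrow> cDom D (Fm (circ C u X)) = Fo X"
  "u \<in> EMmon \<Longrightarrow> X \<in> cObj C \<Longrightarrow> cCod D (Fm (circ C u X)) = Fo (pActO C u X)"
  "u \<in> EMmon \<Longrightarrow> X \<in> cObj C \<Longrightarrow> Fm (cinv C u X) \<in> cMor D"
  "u \<in> EMmon \<Longrightarrow> X \<in> cObj C \<Longrightarrow> cDom D (Fm (cinv C u X)) = Fo (pActO C u X)"
  "u \<in> EMmon \<Longrightarrow> X \<in> cObj C \<Longrightarrow> cCod D (Fm (cinv C u X)) = Fo X"
  using fun_obj[OF F] em_actO[OF emC] Fc_hom Fi_hom by (auto simp: hom_def)

lemma Fc_Fi_assoc: "u \<in> EMmon \<Longrightarrow> X \<in> cObj C \<Longrightarrow> k \<in> cMor D \<Longrightarrow> cCod D k = Fo (pActO C u X) \<Longrightarrow>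
   cComp D (Fm (circ C u X)) (cComp D (Fm (cinv C u X)) k) = k"
  using Dsimps Fsimps Fc_Fi by (metis)
lemma Fi_Fc_assoc: "u \<in> EMmon \<Longrightarrow> X \<in> cObj C \<Longrightarrow> k \<in> cMor D \<Longrightarrow> cCod D k = Fo X \<Longrightarrow>
   cComp D (Fm (cinv C u X)) (cComp D (Fm (circ C u X)) k) = k"
  using Dsimps Fsimps Fi_Fc by (metis)

lemma iso_inv_idD: "Y \<in> cObj D \<Longrightarrow> iso_inv D (cId D Y) = cId D Y"
  using iso_inv_eq[OF cD cat_id[OF cD] cat_id[OF cD]] cat_idl[OF cD cat_id[OF cD]] by blast

lemma Fc_o: "u \<in> EMmon \<Longrightarrow> v \<in> EMmon \<Longrightarrow> Y \<in> cObj C \<Longrightarrow>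
   Fm (circ C (u \<circ> v) Y) = cComp D (Fm (circ C u (pActO C v Y))) (Fm (circ C v Y))"
  using circ_o[OF emC] fun_comp[OF F circ_hom[OF emC] circ_hom[OF emC]] em_actO[OF emC] by metis
lemma Fi_o: "u \<in> EMmon \<Longrightarrow> v \<in> EMmon \<Longrightarrow> X \<in> cObj C \<Longrightarrow>
   Fm (cinv C (u \<circ> v) X) = cComp D (Fm (cinv C v X)) (Fm (cinv C u (pActO C v X)))"
  using cinv_o[OF emC] fun_comp[OF F cinv_hom[OF emC] cinv_hom[OF emC]] em_actO[OF emC] by metis

lemmas DF = iso_Fc Dsimps Fsimps Fc_Fi Fi_Fc Fc_Fi_assoc Fi_Fc_assoc

lemma P_EM: "is_EM_category P"
  unfolding is_EM_category_def
proof (intro conjI ballI impI P_cat)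
  fix u X assume "u \<in> EMmon" "X \<in> cObj P" then show "pActO P u X \<in> cObj P"
    by (simp add: P_simps em_actO[OF emC])
next
  fix u v f assume u: "u \<in> EMmon" and v: "v \<in> EMmon" and f: "f \<in> cMor P"
  then show "pActM P u v f \<in> hom P (pActO P u (cDom P f)) (pActO P v (cCod P f))"
    by (auto elim!: mor_cases simp: P_simps P_hom actP hom_def DF)
next
  fix u X assume u: "u \<in> EMmon" and X: "X \<in> cObj P"
  then show "pActM P u u (cId P X) = cId P (pActO P u X)"
    by (auto simp: P_simps actP DF)
next
  fix u v w f g assume u: "u \<in> EMmon" and v: "v \<in> EMmon" and w: "w \<in> EMmon"
    and f: "f \<in> cMor P" and g: "g \<in> cMor P" and fg: "cCod P f = cDom P g"
  then show "cComp P (pActM P v w g) (pActM P u v f) = pActM P u w (cComp P g f)"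
    by (auto elim!: mor_cases simp: P_simps actP hom_def DF)
next
  fix X assume "X \<in> cObj P" then show "pActO P id X = X" by (simp add: P_simps em_idO[OF emC])
next
  fix f assume f: "f \<in> cMor P"
  obtain X g Y where fx: "f = (X, g, Y)" and X: "X \<in> cObj C" and Y: "Y \<in> cObj C"
    and g: "g \<in> hom D (Fo X) (Fo Y)" using f by (rule mor_cases)
  have gg: "g \<in> cMor D" "cDom D g = Fo X" "cCod D g = Fo Y" using g by (auto simp: hom_def)
  have "pActM P id id f = (pActO C id X, cComp D (Fm (circ C id Y)) (cComp D g (Fm (cinv C id X))), pActO C id Y)"
    using actP[OF id_EMmon X] fx by simp
  also have "\<dots> = (X, cComp D (cId D (Fo Y)) (cComp D g (cId D (Fo X))), Y)"
    using em_idO[OF emC X] em_idO[OF emC Y] circ_id[OF emC Y] cinv_id[OF emC X] fun_id[OF F X] fun_id[OF F Y]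
    by simp
  also have "\<dots> = f" using fx gg cat_idl[OF cD g] cat_idr[OF cD g] by simp
  finally show "pActM P id id f = f" .
next
  fix u v X assume "u \<in> EMmon" "v \<in> EMmon" "X \<in> cObj P"
  then show "pActO P (u \<circ> v) X = pActO P u (pActO P v X)" by (simp add: P_simps em_compO[OF emC])
next
  fix u u' v v' f assume u: "u \<in> EMmon" and u': "u' \<in> EMmon" and v: "v \<in> EMmon" and v': "v' \<in> EMmon"
    and f: "f \<in> cMor P"
  obtain X g Y where fx: "f = (X, g, Y)" and X: "X \<in> cObj C" and Y: "Y \<in> cObj C"
    and g: "g \<in> hom D (Fo X) (Fo Y)" using f by (rule mor_cases)
  have gg: "g \<in> cMor D" "cDom D g = Fo X" "cCod D g = Fo Y" using g by (auto simp: hom_def)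
  have vX: "pActO C v X \<in> cObj C" and vY: "pActO C v' Y \<in> cObj C" using em_actO[OF emC] v v' X Y by auto
  have "pActM P (u \<circ> v) (u' \<circ> v') f = (pActO C (u \<circ> v) X, cComp D (Fm (circ C (u' \<circ> v') Y))
      (cComp D g (Fm (cinv C (u \<circ> v) X))), pActO C (u' \<circ> v') Y)"
    using actP[OF EMmon_comp[OF u v] X] fx by simp
  also have "\<dots> = (pActO C u (pActO C v X), cComp D (cComp D (Fm (circ C u' (pActO C v' Y))) (Fm (circ C v' Y)))
      (cComp D g (cComp D (Fm (cinv C v X)) (Fm (cinv C u (pActO C v X))))), pActO C u' (pActO C v' Y))"
    using Fc_o[OF u' v' Y] Fi_o[OF u v X] em_compO[OF emC u v X] em_compO[OF emC u' v' Y] by simp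
  also have "\<dots> = pActM P u u' (pActM P v v' f)"
    using actP[OF v X] actP[OF u vX] fx u u' v v' X Y vX vY gg by (simp add: DF)
  finally show "pActM P (u \<circ> v) (u' \<circ> v') f = pActM P u u' (pActM P v v' f)" .
qed

end



lemma ps_assocO: "parsummable C \<Longrightarrow> X \<in> cObj C \<Longrightarrow> Y \<in> cObj C \<Longrightarrow> Z \<in> cObj C \<Longrightarrow>
   disj C X Y \<Longrightarrow> disj C X Z \<Longrightarrow> disj C Y Z \<Longrightarrow> pPlusO C (pPlusO C X Y) Z = pPlusO C X (pPlusO C Y Z)"
  unfolding parsummable_def by blast
lemma ps_commO: "parsummable C \<Longrightarrow> X \<in> cObj C \<Longrightarrow> Y \<in> cObj C \<Longrightarrow>
   disj C X Y \<Longrightarrow> pPlusO C X Y = pPlusO C Y X"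
  unfolding parsummable_def by blast

context L
begin

lemma Fo_plus: "X \<in> cObj C \<Longrightarrow> Y \<in> cObj C \<Longrightarrow> disj C X Y \<Longrightarrow> Fo (pPlusO C X Y) = pPlusO D (Fo X) (Fo Y)"
  using S by (simp add: preserves_sums_def)
lemma Fo_disj: "X \<in> cObj C \<Longrightarrow> Y \<in> cObj C \<Longrightarrow> disj C X Y \<Longrightarrow> disj D (Fo X) (Fo Y)"
  using S by (simp add: preserves_sums_def)
lemma Fm_plus: "disjM C f g \<Longrightarrow> Fm (pPlusM C f g) = pPlusM D (Fm f) (Fm g)"
  using S by (simp add: preserves_sums_def)
lemma Fo_zero: "Fo (pZero C) = pZero D"
  using S by (simp add: preserves_sums_def)

lemma P_disjM: "disjM P (X, a, Y) (X', b, Y') \<longleftrightarrow> X \<in> cObj C \<and> Y \<in> cObj C \<and> a \<in> hom D (Fo X) (Fo Y) \<and>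
   X' \<in> cObj C \<and> Y' \<in> cObj C \<and> b \<in> hom D (Fo X') (Fo Y') \<and> disj C X X' \<and> disj C Y Y'"
  by (auto simp: disjM_def P_simps P_disj)

lemma dD: "a \<in> hom D (Fo X) (Fo Y) \<Longrightarrow> b \<in> hom D (Fo X') (Fo Y') \<Longrightarrow> X \<in> cObj C \<Longrightarrow> X' \<in> cObj C \<Longrightarrow>
   Y \<in> cObj C \<Longrightarrow> Y' \<in> cObj C \<Longrightarrow> disj C X X' \<Longrightarrow> disj C Y Y' \<Longrightarrow> disjM D a b"
  by (rule disjM_hom, assumption, assumption) (rule Fo_disj; assumption)+

lemma plusD_hom: "a \<in> hom D (Fo X) (Fo Y) \<Longrightarrow> b \<in> hom D (Fo X') (Fo Y') \<Longrightarrow> X \<in> cObj C \<Longrightarrow> X' \<in> cObj C \<Longrightarrow>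
   Y \<in> cObj C \<Longrightarrow> Y' \<in> cObj C \<Longrightarrow> disj C X X' \<Longrightarrow> disj C Y Y' \<Longrightarrow>
   pPlusM D a b \<in> hom D (Fo (pPlusO C X X')) (Fo (pPlusO C Y Y'))"
proof -
  assume a: "a \<in> hom D (Fo X) (Fo Y)" and b: "b \<in> hom D (Fo X') (Fo Y')" and o: "X \<in> cObj C" "X' \<in> cObj C"
    "Y \<in> cObj C" "Y' \<in> cObj C" and d: "disj C X X'" "disj C Y Y'"
  have "pPlusM D a b \<in> hom D (pPlusO D (cDom D a) (cDom D b)) (pPlusO D (cCod D a) (cCod D b))"
    using ps_plusM[OF pD dD[OF a b o d]] .
  then show ?thesis using homD[OF a] homD[OF b] Fo_plus[OF o(1,2) d(1)] Fo_plus[OF o(3,4) d(2)] by simp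
qed

lemma interD: "a \<in> hom D (Fo X) (Fo Y) \<Longrightarrow> a' \<in> hom D (Fo X') (Fo Y') \<Longrightarrow>
   b \<in> hom D (Fo Y) (Fo Z) \<Longrightarrow> b' \<in> hom D (Fo Y') (Fo Z') \<Longrightarrow>
   X \<in> cObj C \<Longrightarrow> X' \<in> cObj C \<Longrightarrow> Y \<in> cObj C \<Longrightarrow> Y' \<in> cObj C \<Longrightarrow> Z \<in> cObj C \<Longrightarrow> Z' \<in> cObj C \<Longrightarrow>
   disj C X X' \<Longrightarrow> disj C Y Y' \<Longrightarrow> disj C Z Z' \<Longrightarrow>
   pPlusM D (cComp D b a) (cComp D b' a') = cComp D (pPlusM D b b') (pPlusM D a a')"
proof -
  assume a: "a \<in> hom D (Fo X) (Fo Y)" and a': "a' \<in> hom D (Fo X') (Fo Y')"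
    and b: "b \<in> hom D (Fo Y) (Fo Z)" and b': "b' \<in> hom D (Fo Y') (Fo Z')"
    and o: "X \<in> cObj C" "X' \<in> cObj C" "Y \<in> cObj C" "Y' \<in> cObj C" "Z \<in> cObj C" "Z' \<in> cObj C"
    and d: "disj C X X'" "disj C Y Y'" "disj C Z Z'"
  show ?thesis using ps_inter[OF pD dD[OF a a' o(1-4) d(1,2)] dD[OF b b' o(3-6) d(2,3)]] homD[OF a] homD[OF a']
    homD[OF b] homD[OF b'] by simp
qed

lemma P_ps: "parsummable P"
  unfolding parsummable_def is_tame_def
proof (intro conjI allI ballI impI P_EM)
  fix X assume "X \<in> cObj P" then show "finite (em_supp P X)"
    using ps_tame[OF pC] by (simp add: P_supp P_simps is_tame_def)
next
  show "pZero P \<in> cObj P" by (simp add: P_simps ps_zero[OF pC])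
next
  show "em_supp P (pZero P) = {}" by (simp add: P_simps P_supp ps_zero[OF pC])
next
  fix X Y assume "X \<in> cObj P" "Y \<in> cObj P" "disj P X Y"
  then show "pPlusO P X Y \<in> cObj P" by (simp add: P_simps P_disj ps_plusO[OF pC])
next
  fix f g assume fg: "disjM P f g"
  obtain X a Y where f: "f = (X, a, Y)" by (cases f)
  obtain X' b Y' where g: "g = (X', b, Y')" by (cases g)
  have h: "X \<in> cObj C" "Y \<in> cObj C" "a \<in> hom D (Fo X) (Fo Y)" "X' \<in> cObj C" "Y' \<in> cObj C"
    "b \<in> hom D (Fo X') (Fo Y')" "disj C X X'" "disj C Y Y'" using fg f g P_disjM by auto
  show "pPlusM P f g \<in> hom P (pPlusO P (cDom P f) (cDom P g)) (pPlusO P (cCod P f) (cCod P g))"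
    using h plusD_hom[OF h(3,6,1,4,2,5,7,8)] ps_plusO[OF pC] by (simp add: f g P_simps P_hom)
next
  fix X Y assume "X \<in> cObj P" "Y \<in> cObj P" "disj P X Y"
  then have h: "X \<in> cObj C" "Y \<in> cObj C" "disj C X Y" by (auto simp: P_simps P_disj)
  show "pPlusM P (cId P X) (cId P Y) = cId P (pPlusO P X Y)"
    using h ps_plusId[OF pD fun_obj[OF F] fun_obj[OF F] Fo_disj[OF h]] Fo_plus[OF h]
    by (simp add: P_simps)
next
  fix f f' g g' assume a: "disjM P f f' \<and> disjM P g g' \<and> cCod P f = cDom P g \<and> cCod P f' = cDom P g'"
  obtain X a Y where f: "f = (X, a, Y)" by (cases f)
  obtain X' a' Y' where f': "f' = (X', a', Y')" by (cases f')
  obtain Y2 b Z where g: "g = (Y2, b, Z)" by (cases g)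
  obtain Y2' b' Z' where g': "g' = (Y2', b', Z')" by (cases g')
  have e: "Y2 = Y" "Y2' = Y'" using a f f' g g' by (auto simp: P_simps)
  have h: "X \<in> cObj C" "Y \<in> cObj C" "a \<in> hom D (Fo X) (Fo Y)" "X' \<in> cObj C" "Y' \<in> cObj C"
    "a' \<in> hom D (Fo X') (Fo Y')" "disj C X X'" "disj C Y Y'" using a f f' P_disjM by auto
  have h2: "Z \<in> cObj C" "b \<in> hom D (Fo Y) (Fo Z)" "Z' \<in> cObj C"
    "b' \<in> hom D (Fo Y') (Fo Z')" "disj C Z Z'" using a g g' e P_disjM by auto
  show "pPlusM P (cComp P g f) (cComp P g' f') = cComp P (pPlusM P g g') (pPlusM P f f')"
    using interD[OF h(3,6) h2(2,4) h(1,4,2,5) h2(1,3) h(7,8) h2(5)]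
    by (simp add: f f' g g' e P_simps)
next
  fix X assume "X \<in> cObj P"
  then show "pPlusO P (pZero P) X = X" "pPlusO P X (pZero P) = X"
    using ps_unitO[OF pC] by (auto simp: P_simps)
next
  fix f assume fm: "f \<in> cMor P"
  obtain X a Y where f: "f = (X, a, Y)" and X: "X \<in> cObj C" and Y: "Y \<in> cObj C"
    and a: "a \<in> hom D (Fo X) (Fo Y)" using fm by (rule mor_cases)
  have am: "a \<in> cMor D" using a by (simp add: hom_def)
  show "pPlusM P (cId P (pZero P)) f = f" "pPlusM P f (cId P (pZero P)) = f"
    using ps_unitM[OF pD am] ps_unitO[OF pC X] ps_unitO[OF pC Y]
    by (simp_all add: f P_simps Fo_zero)
next
  fix X Y Z assume "X \<in> cObj P" "Y \<in> cObj P" "Z \<in> cObj P" "disj P X Y \<and> disj P X Z \<and> disj P Y Z"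
  then show "pPlusO P (pPlusO P X Y) Z = pPlusO P X (pPlusO P Y Z)"
    using ps_assocO[OF pC] by (simp add: P_simps P_disj)
next
  fix f g h assume a: "disjM P f g \<and> disjM P f h \<and> disjM P g h"
  obtain X a Y where f: "f = (X, a, Y)" by (cases f)
  obtain X' b Y' where g: "g = (X', b, Y')" by (cases g)
  obtain X'' c Y'' where h: "h = (X'', c, Y'')" by (cases h)
  have hh: "X \<in> cObj C" "Y \<in> cObj C" "a \<in> hom D (Fo X) (Fo Y)" "X' \<in> cObj C" "Y' \<in> cObj C"
    "b \<in> hom D (Fo X') (Fo Y')" "X'' \<in> cObj C" "Y'' \<in> cObj C"
    "c \<in> hom D (Fo X'') (Fo Y'')" "disj C X X'" "disj C Y Y'" "disj C X X''" "disj C Y Y''"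
    "disj C X' X''" "disj C Y' Y''"
    using a f g h P_disjM by auto
  show "pPlusM P (pPlusM P f g) h = pPlusM P f (pPlusM P g h)"
    using ps_assocM[OF pD dD[OF hh(3,6) hh(1,4,2,5,10,11)] dD[OF hh(3,9) hh(1,7,2,8,12,13)]
        dD[OF hh(6,9) hh(4,7,5,8,14,15)]]
      ps_assocO[OF pC hh(1,4,7,10,12,14)] ps_assocO[OF pC hh(2,5,8,11,13,15)]
    by (simp add: f g h P_simps)
next
  fix X Y assume "X \<in> cObj P" "Y \<in> cObj P" "disj P X Y"
  then show "pPlusO P X Y = pPlusO P Y X"
    using ps_commO[OF pC] by (simp add: P_simps P_disj)
next
  fix f g assume fg: "disjM P f g"
  obtain X a Y where f: "f = (X, a, Y)" by (cases f)
  obtain X' b Y' where g: "g = (X', b, Y')" by (cases g)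
  have h: "X \<in> cObj C" "Y \<in> cObj C" "a \<in> hom D (Fo X) (Fo Y)" "X' \<in> cObj C" "Y' \<in> cObj C"
    "b \<in> hom D (Fo X') (Fo Y')" "disj C X X'" "disj C Y Y'" using fg f g P_disjM by auto
  show "pPlusM P f g = pPlusM P g f"
    using ps_commM[OF pD dD[OF h(3,6,1,4,2,5,7,8)]] ps_commO[OF pC h(1,4,7)] ps_commO[OF pC h(2,5,8)]
    by (simp add: f g P_simps)
next
  fix u X Y assume "u \<in> EMmon" "X \<in> cObj P" "Y \<in> cObj P" "disj P X Y"
  then show "pActO P u (pPlusO P X Y) = pPlusO P (pActO P u X) (pActO P u Y)"
    using ps_eqO[OF pC] by (simp add: P_simps P_disj)
next
  fix u v f g assume u: "u \<in> EMmon" and v: "v \<in> EMmon" and fg: "disjM P f g"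
  obtain X a Y where f: "f = (X, a, Y)" by (cases f)
  obtain X' b Y' where g: "g = (X', b, Y')" by (cases g)
  have h: "X \<in> cObj C" "Y \<in> cObj C" "a \<in> hom D (Fo X) (Fo Y)" "X' \<in> cObj C" "Y' \<in> cObj C"
    "b \<in> hom D (Fo X') (Fo Y')" "disj C X X'" "disj C Y Y'" using fg f g P_disjM by auto
  have tame: "is_tame C" using ps_tame[OF pC] .
  have uX: "pActO C u X \<in> cObj C" "pActO C u X' \<in> cObj C" "disj C (pActO C u X) (pActO C u X')"
    using em_actO[OF emC u] h disj_act[OF tame _ _ u] by auto
  have vY: "pActO C v Y \<in> cObj C" "pActO C v Y' \<in> cObj C" "disj C (pActO C v Y) (pActO C v Y')"
    using em_actO[OF emC v] h disj_act[OF tame _ _ v] by auto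
  have XX: "pPlusO C X X' \<in> cObj C" using ps_plusO[OF pC] h by auto
  have cc: "Fm (circ C v (pPlusO C Y Y')) = pPlusM D (Fm (circ C v Y)) (Fm (circ C v Y'))"
    using ps_circ_plus[OF pC v h(2,5,8)] Fm_plus disjM_hom[OF circ_hom[OF emC v h(2)] circ_hom[OF emC v h(5)] h(8) vY(3)]
    by simp
  have ci: "Fm (cinv C u (pPlusO C X X')) = pPlusM D (Fm (cinv C u X)) (Fm (cinv C u X'))"
    using ps_cinv_plus[OF pC u h(1,4,7)] Fm_plus disjM_hom[OF cinv_hom[OF emC u h(1)] cinv_hom[OF emC u h(4)] uX(3) h(7)]
    by simp
  have i1: "pPlusM D (cComp D a (Fm (cinv C u X))) (cComp D b (Fm (cinv C u X'))) =
      cComp D (pPlusM D a b) (pPlusM D (Fm (cinv C u X)) (Fm (cinv C u X')))"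
    using interD[OF Fi_hom[OF u h(1)] Fi_hom[OF u h(4)] h(3,6) uX(1,2) h(1,4,2,5) uX(3) h(7,8)] .
  have i2: "pPlusM D (cComp D (Fm (circ C v Y)) (cComp D a (Fm (cinv C u X))))
                     (cComp D (Fm (circ C v Y')) (cComp D b (Fm (cinv C u X')))) =
      cComp D (pPlusM D (Fm (circ C v Y)) (Fm (circ C v Y')))
        (pPlusM D (cComp D a (Fm (cinv C u X))) (cComp D b (Fm (cinv C u X'))))"
    using interD[OF cat_comp[OF cD Fi_hom[OF u h(1)] h(3)] cat_comp[OF cD Fi_hom[OF u h(4)] h(6)]
        Fc_hom[OF v h(2)] Fc_hom[OF v h(5)] uX(1,2) h(2,5) vY(1,2) uX(3) h(8) vY(3)] .
  show "pActM P u v (pPlusM P f g) = pPlusM P (pActM P u v f) (pActM P u v g)"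
    using actP[OF u XX] actP[OF u h(1)] actP[OF u h(4)] ps_eqO[OF pC u h(1,4,7)] ps_eqO[OF pC v h(2,5,8)]
      cc ci i1 i2
    by (simp add: f g P_simps(1-7,9-11))
qed

end



context L
begin

lemma I_functor: "is_functor C P (\<lambda>X. X) (I_mor C Fm)"
  unfolding is_functor_def
proof (intro conjI ballI impI cC P_cat)
  fix X assume "X \<in> cObj C" then show "X \<in> cObj P" by (simp add: P_simps)
next
  fix f assume f: "f \<in> cMor C"
  have h: "f \<in> hom C (cDom C f) (cCod C f)" using hom_self[OF f] .
  show "I_mor C Fm f \<in> hom P (cDom C f) (cCod C f)"
    using cat_obj[OF cC h] fun_hom[OF F h] by (simp add: I_mor_def P_hom)
next
  fix X assume X: "X \<in> cObj C"
  show "I_mor C Fm (cId C X) = cId P X"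
    using homD[OF cat_id[OF cC X]] fun_id[OF F X] by (simp add: I_mor_def P_simps)
next
  fix f g assume f: "f \<in> cMor C" and g: "g \<in> cMor C" and fg: "cCod C f = cDom C g"
  have hf: "f \<in> hom C (cDom C f) (cDom C g)" using hom_self[OF f] fg by simp
  have hg: "g \<in> hom C (cDom C g) (cCod C g)" using hom_self[OF g] .
  show "I_mor C Fm (cComp C g f) = cComp P (I_mor C Fm g) (I_mor C Fm f)"
    using homD[OF cat_comp[OF cC hf hg]] fun_comp[OF F hf hg] by (simp add: I_mor_def P_simps)
qed

lemma I_ps: "ps_morphism C P (\<lambda>X. X) (I_mor C Fm)"
  unfolding ps_morphism_def
proof (intro conjI ballI allI impI pC P_ps I_functor)
  fix u X assume "u \<in> EMmon" "X \<in> cObj C"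
  then show "pActO C u X = pActO P u X" by (simp add: P_simps)
next
  fix u v f assume u: "u \<in> EMmon" and v: "v \<in> EMmon" and f: "f \<in> cMor C"
  have h: "f \<in> hom C (cDom C f) (cCod C f)" using hom_self[OF f] .
  have X: "cDom C f \<in> cObj C" and Y: "cCod C f \<in> cObj C" using cat_obj[OF cC h] by auto
  have e: "pActM C u v f = cComp C (circ C v (cCod C f)) (cComp C f (cinv C u (cDom C f)))"
    using actM_decomp[OF emC u v h] .
  have Fe: "Fm (pActM C u v f) = cComp D (Fm (circ C v (cCod C f))) (cComp D (Fm f) (Fm (cinv C u (cDom C f))))"
    unfolding e
    using fun_comp[OF F cat_comp[OF cC cinv_hom[OF emC u X] h] circ_hom[OF emC v Y]]
      fun_comp[OF F cinv_hom[OF emC u X] h] by simp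
  show "I_mor C Fm (pActM C u v f) = pActM P u v (I_mor C Fm f)"
    using homD[OF em_actM[OF emC u v h]] Fe actP[OF u X] by (simp add: I_mor_def)
next
  show "pZero C = pZero P" by (simp add: P_simps)
next
  fix X Y assume "X \<in> cObj C" "Y \<in> cObj C" "disj C X Y"
  then show "pPlusO C X Y = pPlusO P X Y" by (simp add: P_simps)
next
  fix f g assume fg: "disjM C f g"
  show "I_mor C Fm (pPlusM C f g) = pPlusM P (I_mor C Fm f) (I_mor C Fm g)"
    using homD[OF ps_plusM[OF pC fg]] Fm_plus[OF fg] by (simp add: I_mor_def P_simps)
qed

lemma Fhat_functor: "is_functor P D Fo Fhat_mor"
  unfolding is_functor_def
proof (intro conjI ballI impI cD P_cat)
  fix X assume "X \<in> cObj P" then show "Fo X \<in> cObj D" using fun_obj[OF F] by (simp add: P_simps)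
next
  fix f assume "f \<in> cMor P" then show "Fhat_mor f \<in> hom D (Fo (cDom P f)) (Fo (cCod P f))"
    by (auto elim!: mor_cases simp: P_simps Fhat_mor_def)
next
  fix X assume "X \<in> cObj P" then show "Fhat_mor (cId P X) = cId D (Fo X)"
    by (simp add: P_simps Fhat_mor_def)
next
  fix f g assume "f \<in> cMor P" "g \<in> cMor P" "cCod P f = cDom P g"
  then show "Fhat_mor (cComp P g f) = cComp D (Fhat_mor g) (Fhat_mor f)"
    by (auto elim!: mor_cases simp: P_simps Fhat_mor_def)
qed

lemma equiv_from:
  fixes Xf :: "'c \<Rightarrow> 'a" and hf :: "'c \<Rightarrow> 'd"
  assumes A: "\<forall>Y\<in>cObj D. Xf Y \<in> cObj C \<and> hf Y \<in> hom D (Fo (Xf Y)) Y \<and> is_iso D (hf Y)"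
  shows "is_equivalence P D Fo Fhat_mor"
proof -
  define hi where "hi Y = iso_inv D (hf Y)" for Y
  have hiP: "hi Y \<in> hom D Y (Fo (Xf Y))" "cComp D (hi Y) (hf Y) = cId D (Fo (Xf Y))"
    "cComp D (hf Y) (hi Y) = cId D Y" if "Y \<in> cObj D" for Y
    using iso_inv_props[OF cD, of "hf Y" "Fo (Xf Y)" Y] A that unfolding hi_def by auto
  have XfO: "Y \<in> cObj D \<Longrightarrow> Xf Y \<in> cObj C" for Y using A by blast
  have hfH: "Y \<in> cObj D \<Longrightarrow> hf Y \<in> hom D (Fo (Xf Y)) Y" for Y using A by blast
  have ms: "Y \<in> cObj D \<Longrightarrow> hf Y \<in> cMor D" "Y \<in> cObj D \<Longrightarrow> cDom D (hf Y) = Fo (Xf Y)"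
     "Y \<in> cObj D \<Longrightarrow> cCod D (hf Y) = Y"
     "Y \<in> cObj D \<Longrightarrow> hi Y \<in> cMor D" "Y \<in> cObj D \<Longrightarrow> cDom D (hi Y) = Y"
     "Y \<in> cObj D \<Longrightarrow> cCod D (hi Y) = Fo (Xf Y)" for Y
    using hfH[of Y] hiP[of Y] by (auto simp: hom_def)
  have canc: "cComp D (hf Y) (cComp D (hi Y) k) = k" if "Y \<in> cObj D" "k \<in> cMor D" "cCod D k = Y" for Y k
    using that ms[of Y] hiP(3)[OF that(1)] Dsimps by metis
  have canc2: "cComp D (hi Y) (cComp D (hf Y) k) = k" if "Y \<in> cObj D" "k \<in> cMor D" "cCod D k = Fo (Xf Y)" for Y k
    using that ms[of Y] hiP(2)[OF that(1)] Dsimps fun_obj[OF F XfO] by metis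
  have objD: "f \<in> cMor D \<Longrightarrow> cDom D f \<in> cObj D \<and> cCod D f \<in> cObj D" for f
    using cD by (simp add: is_category_def)
  define Gm where "Gm g = (Xf (cDom D g), cComp D (hi (cCod D g)) (cComp D g (hf (cDom D g))), Xf (cCod D g))" for g
  define eta where "eta X = (X, hi (Fo X), Xf (Fo X))" for X
  have G: "is_functor D P Xf Gm"
    unfolding is_functor_def
  proof (intro conjI ballI impI cD P_cat)
    fix Y assume "Y \<in> cObj D" then show "Xf Y \<in> cObj P" using XfO by (simp add: P_simps)
  next
    fix g assume g: "g \<in> cMor D"
    have o: "cDom D g \<in> cObj D" "cCod D g \<in> cObj D" using objD[OF g] by auto
    have "cComp D (hi (cCod D g)) (cComp D g (hf (cDom D g))) \<in> hom D (Fo (Xf (cDom D g))) (Fo (Xf (cCod D g)))"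
      using cat_comp[OF cD cat_comp[OF cD hfH[OF o(1)] hom_self[OF g]] hiP(1)[OF o(2)]] .
    then show "Gm g \<in> hom P (Xf (cDom D g)) (Xf (cCod D g))"
      using o XfO by (simp add: Gm_def P_hom)
  next
    fix Y assume Y: "Y \<in> cObj D"
    then show "Gm (cId D Y) = cId P (Xf Y)"
      using ms[OF Y] hiP[OF Y] by (simp add: Gm_def P_simps Dsimps)
  next
    fix f g assume f: "f \<in> cMor D" and g: "g \<in> cMor D" and fg: "cCod D f = cDom D g"
    then show "Gm (cComp D g f) = cComp P (Gm g) (Gm f)"
      using objD[OF f] objD[OF g] ms canc by (simp add: Gm_def P_simps Dsimps)
  qed
  have e1: "\<forall>X\<in>cObj P. eta X \<in> hom P X (Xf (Fo X)) \<and> is_iso P (eta X)"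
  proof
    fix X assume X: "X \<in> cObj P"
    then have X': "X \<in> cObj C" "Fo X \<in> cObj D" using fun_obj[OF F] by (auto simp: P_simps)
    have h: "eta X \<in> hom P X (Xf (Fo X))" using X' hiP(1)[OF X'(2)] XfO[OF X'(2)] by (simp add: eta_def P_hom)
    have h2: "(Xf (Fo X), hf (Fo X), X) \<in> hom P (Xf (Fo X)) X"
      using X' hfH[OF X'(2)] XfO[OF X'(2)] by (simp add: P_hom)
    have "is_iso P (eta X)"
      by (rule is_isoI[OF P_cat h h2]) (simp_all add: eta_def P_simps hiP[OF X'(2)])
    then show "eta X \<in> hom P X (Xf (Fo X)) \<and> is_iso P (eta X)" using h by simp
  qed
  have e2: "\<forall>f\<in>cMor P. cComp P (eta (cCod P f)) f = cComp P (Gm (Fhat_mor f)) (eta (cDom P f))"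
  proof
    fix f assume f: "f \<in> cMor P"
    obtain X a Y where fx: "f = (X, a, Y)" and X: "X \<in> cObj C" and Y: "Y \<in> cObj C"
      and a: "a \<in> hom D (Fo X) (Fo Y)" using f by (rule mor_cases)
    have aa: "a \<in> cMor D" "cDom D a = Fo X" "cCod D a = Fo Y" using a by (auto simp: hom_def)
    have FX: "Fo X \<in> cObj D" "Fo Y \<in> cObj D" using fun_obj[OF F] X Y by auto
    show "cComp P (eta (cCod P f)) f = cComp P (Gm (Fhat_mor f)) (eta (cDom P f))"
      using aa FX ms[OF FX(1)] ms[OF FX(2)] hiP(3)[OF FX(1)] fun_obj[OF F XfO[OF FX(1)]]
      by (simp add: fx eta_def Gm_def Fhat_mor_def P_simps Dsimps)
  qed
  have e3: "\<forall>Y\<in>cObj D. hf Y \<in> hom D (Fo (Xf Y)) Y \<and> is_iso D (hf Y)" using A by blast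
  have e4: "\<forall>g\<in>cMor D. cComp D (hf (cCod D g)) (Fhat_mor (Gm g)) = cComp D g (hf (cDom D g))"
  proof
    fix g assume g: "g \<in> cMor D"
    show "cComp D (hf (cCod D g)) (Fhat_mor (Gm g)) = cComp D g (hf (cDom D g))"
      using objD[OF g] g ms canc by (simp add: Gm_def Fhat_mor_def Dsimps)
  qed
  show ?thesis unfolding is_equivalence_def
    apply (intro conjI Fhat_functor)
    apply (rule exI[where x=Xf], rule exI[where x=Gm], rule exI[where x=eta], rule exI[where x=hf])
    using G e1 e2 e3 e4 by blast
qed

lemma P_equiv: "ess_surj C D Fo \<Longrightarrow> is_equivalence P D Fo Fhat_mor"
proof -
  assume es: "ess_surj C D Fo"
  have "\<forall>Y\<in>cObj D. \<exists>p. fst p \<in> cObj C \<and> snd p \<in> hom D (Fo (fst p)) Y \<and> is_iso D (snd p)"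
    using es unfolding ess_surj_def by fastforce
  then obtain ch where ch: "\<forall>Y\<in>cObj D. fst (ch Y) \<in> cObj C \<and> snd (ch Y) \<in> hom D (Fo (fst (ch Y))) Y \<and> is_iso D (snd (ch Y))"
    by metis
  show ?thesis by (rule equiv_from[of "\<lambda>Y. fst (ch Y)" "\<lambda>Y. snd (ch Y)"]) (use ch in blast)
qed

end

theorem lemma3p10:
  fixes C :: "('a, 'b) pcat" and D :: "('c, 'd) pcat"
    and Fo :: "'a \<Rightarrow> 'c" and Fm :: "'b \<Rightarrow> 'd"
  assumes "parsummable C" and "parsummable D"
    and "is_functor C D Fo Fm" and "preserves_sums C D Fo Fm"
  shows "ps_morphism C (pushC C D Fo Fm) (\<lambda>X. X) (I_mor C Fm)
       \<and> (ess_surj C D Fo \<longrightarrow> is_equivalence (pushC C D Fo Fm) D Fo Fhat_mor)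
       \<and> (\<forall>X\<in>cObj C. Fo X = Fo ((\<lambda>X. X) X))
       \<and> (\<forall>f\<in>cMor C. Fm f = Fhat_mor (I_mor C Fm f))"
proof -
  interpret L C D Fo Fm using assms by (unfold_locales)
  show ?thesis using I_ps P_equiv by (simp add: I_mor_def Fhat_mor_def)
qed


end
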